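(* Let $0<\alpha<1$, $\gamma>0$, and let $h$ be a real normalised probability density on $(0,\infty)$ satisfying $$h(x)=\frac{\gamma}{x}\int_0^x\frac{h(u)}{(x-\alpha u)^{\gamma}}\,du,\qquad x\in(0,\infty),$$ with Mellin transform $H(s)=\int_0^\infty x^{s-1}h(x)\,dx$. Let $\sigma=\Re(s)$. Then for $\sigma<1+\gamma$, $$|H(s)|\le (1-\alpha)^{-\gamma}\,\Gamma\!\left(\frac{1+\gamma-\sigma}{\gamma}\right).$$
   Context: $\Gamma$ is the Euler gamma function. *)

theory Defs
  imports "HOL-Analysis.Analysis"
begin

definition mellin_integrand :: "(real \<Rightarrow> real) \<Rightarrow> complex \<Rightarrow> real \<Rightarrow> complex" where
  "mellin_integrand h s x = (complex_of_real x) powr (s - 1) * complex_of_real (h x)"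

definition mellin :: "(real \<Rightarrow> real) \<Rightarrow> complex \<Rightarrow> complex" where
  "mellin h s = (LINT x:{0<..}|lborel. mellin_integrand h s x)"

end

theory Submission
  imports Defs
begin

lemma powr_int_eq:
  fixes y x g :: real
  assumes "0 < y" "y < x" "0 < g"
  shows "set_integrable lborel {y..<x} (\<lambda>u. g * u powr (-1-g))"
    "(LINT u:{y..<x}|lborel. g * u powr (-1-g)) = y powr (-g) - x powr (-g)"
proof -
  have cont: "continuous_on {y..x} (\<lambda>u. g * u powr (-1-g))"
    using assms by (intro continuous_intros) auto
  have int: "set_integrable lborel {y..x} (\<lambda>u. g * u powr (-1-g))"
    by (rule borel_integrable_atLeastAtMost'[OF cont])
  then show "set_integrable lborel {y..<x} (\<lambda>u. g * u powr (-1-g))"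
    by (rule set_integrable_subset) auto
  have "(LINT u:{y..x}|lborel. g * u powr (-1-g)) = (- (x powr (-g))) - (- (y powr (-g)))"
    unfolding set_lebesgue_integral_def
  proof (rule integral_FTC_atLeastAtMost)
    show "y \<le> x" using assms by simp
    show "continuous_on {y..x} (\<lambda>u. g * u powr (-1-g))" by fact
    fix u assume u: "y \<le> u" "u \<le> x"
    then have "u > 0" using assms by simp
    have "((\<lambda>u. - (u powr (-g))) has_real_derivative - ((-g) * u powr (-g - 1))) (at u)"
      by (intro derivative_intros has_real_derivative_powr) fact
    moreover have "- ((-g) * u powr (-g - 1)) = g * u powr (-1-g)" proof -
      have e: "-g - 1 = -1 - g" by simp
      show ?thesis unfolding e by simp
    qed
    ultimately show "((\<lambda>u. - (u powr (-g))) has_vector_derivative g * u powr (-1-g)) (at u within {y..x})"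
      by (auto simp: has_real_derivative_iff_has_vector_derivative[symmetric] intro: has_field_derivative_at_within)
  qed
  moreover have "(LINT u:{y..x}|lborel. g * u powr (-1-g)) = (LINT u:{y..<x}|lborel. g * u powr (-1-g))"
  proof (rule set_integral_cong_set)
    show "set_borel_measurable lborel {y..<x} (\<lambda>u. g * u powr (-1-g))"
      using \<open>set_integrable lborel {y..<x} _\<close> unfolding set_borel_measurable_def set_integrable_def
      by (rule borel_measurable_integrable)
    show "set_borel_measurable lborel {y..x} (\<lambda>u. g * u powr (-1-g))"
      using int unfolding set_borel_measurable_def set_integrable_def
      by (rule borel_measurable_integrable)
    show "AE u in lborel. (u \<in> {y..<x}) = (u \<in> {y..x})"
      using AE_lborel_singleton[of x] by eventually_elim auto
  qed
  ultimately show "(LINT u:{y..<x}|lborel. g * u powr (-1-g)) = y powr (-g) - x powr (-g)" by simp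
qed


lemma set_int_nonneg:
  fixes f :: "'a \<Rightarrow> real"
  assumes "\<And>x. x \<in> A \<Longrightarrow> 0 \<le> f x"
  shows "0 \<le> (LINT x:A|M. f x)"
  unfolding set_lebesgue_integral_def by (rule Bochner_Integration.integral_nonneg) (use assms in \<open>auto simp: indicator_def\<close>)

locale mell =
  fixes h :: "real \<Rightarrow> real" and \<alpha> \<gamma> :: real
  assumes alpha: "0 < \<alpha>" "\<alpha> < 1"
    and gamma: "0 < \<gamma>"
    and meas: "h \<in> borel_measurable lborel"
    and nonneg: "\<And>x. 0 < x \<Longrightarrow> 0 \<le> h x"
    and int_h: "set_integrable lborel {0<..} h"
    and norm_h: "(LINT x:{0<..}|lborel. h x) = 1"
    and eq_int: "\<And>x. 0 < x \<Longrightarrow>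
        set_integrable lborel {0<..<x} (\<lambda>u. h u / (x - \<alpha> * u) powr \<gamma>)"
    and eq: "\<And>x. 0 < x \<Longrightarrow>
        h x = \<gamma> / x * (LINT u:{0<..<x}|lborel. h u / (x - \<alpha> * u) powr \<gamma>)"
begin

definition F :: "real \<Rightarrow> real" where
  "F x = (LINT u:{0<..<x}|lborel. h u)"

lemma int_sub: "A \<in> sets lborel \<Longrightarrow> A \<subseteq> {0<..} \<Longrightarrow> set_integrable lborel A h"
  using int_h set_integrable_subset by blast

lemma F_nonneg: "0 \<le> F x"
  unfolding F_def by (rule set_int_nonneg) (auto intro: nonneg)

lemma F_split:
  assumes "0 < y" "y \<le> x"
  shows "F x = F y + (LINT u:{y..<x}|lborel. h u)"
proof -
  have "{0<..<x} = {0<..<y} \<union> {y..<x}" using assms by auto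
  then have "F x = (LINT u:{0<..<y} \<union> {y..<x}|lborel. h u)" unfolding F_def by simp
  also have "\<dots> = F y + (LINT u:{y..<x}|lborel. h u)"
    unfolding F_def using assms
    by (intro set_integral_Un int_sub) auto
  finally show ?thesis .
qed

lemma F_le1: "F x \<le> 1"
proof (cases "x > 0")
  case True
  have "{0<..} = {0<..<x} \<union> {x..}" using True by auto
  then have "1 = (LINT u:{0<..<x} \<union> {x..}|lborel. h u)" using norm_h by simp
  also have "\<dots> = F x + (LINT u:{x..}|lborel. h u)"
    unfolding F_def using True
    by (intro set_integral_Un int_sub) auto
  also have "(LINT u:{x..}|lborel. h u) \<ge> 0"
    using True by (intro set_int_nonneg) (auto intro: nonneg)
  ultimately show ?thesis by linarith
next
  case False
  then have "{0<..<x} = {}" by auto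
  then show ?thesis unfolding F_def by (simp add: set_lebesgue_integral_def)
qed

lemma h_bounds:
  assumes x: "0 < x"
  shows "\<gamma> * x powr (-1-\<gamma>) * F x \<le> h x"
    "h x \<le> \<gamma> * (1-\<alpha>) powr (-\<gamma>) * x powr (-1-\<gamma>) * F x"
proof -
  let ?I = "LINT u:{0<..<x}|lborel. h u / (x - \<alpha> * u) powr \<gamma>"
  have hi: "set_integrable lborel {0<..<x} h" by (rule int_sub) auto
  have pos: "0 < (1-\<alpha>) * x" using alpha x by simp
  have lo: "F x / x powr \<gamma> \<le> ?I"
  proof -
    have "F x / x powr \<gamma> = (LINT u:{0<..<x}|lborel. h u / x powr \<gamma>)"
      unfolding F_def by simp
    also have "\<dots> \<le> ?I"
    proof (rule set_integral_mono)
      show "set_integrable lborel {0<..<x} (\<lambda>u. h u / x powr \<gamma>)"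
        using hi by (simp add: set_integrable_divide)
      show "set_integrable lborel {0<..<x} (\<lambda>u. h u / (x - \<alpha> * u) powr \<gamma>)"
        using eq_int x by blast
      fix u assume u: "u \<in> {0<..<x}"
      have "0 < x - \<alpha> * u" using u alpha
        by (smt (verit, best) greaterThanLessThan_iff mult_less_cancel_right2)
      moreover have "x - \<alpha> * u \<le> x" using u alpha by simp
      ultimately have "(x - \<alpha> * u) powr \<gamma> \<le> x powr \<gamma>"
        using gamma by (intro powr_mono2) auto
      moreover have "0 < (x - \<alpha> * u) powr \<gamma>" using \<open>0 < x - \<alpha> * u\<close> by simp
      moreover have "0 \<le> h u" using u nonneg by auto
      moreover have "0 < x powr \<gamma>" using x by simp
      ultimately show "h u / x powr \<gamma> \<le> h u / (x - \<alpha> * u) powr \<gamma>"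
        by (intro divide_left_mono) (auto intro: mult_pos_pos)
    qed
    finally show ?thesis .
  qed
  have up: "?I \<le> F x / ((1-\<alpha>) * x) powr \<gamma>"
  proof -
    have "?I \<le> (LINT u:{0<..<x}|lborel. h u / ((1-\<alpha>) * x) powr \<gamma>)"
    proof (rule set_integral_mono)
      show "set_integrable lborel {0<..<x} (\<lambda>u. h u / ((1-\<alpha>) * x) powr \<gamma>)"
        using hi by (simp add: set_integrable_divide)
      show "set_integrable lborel {0<..<x} (\<lambda>u. h u / (x - \<alpha> * u) powr \<gamma>)"
        using eq_int x by blast
      fix u assume u: "u \<in> {0<..<x}"
      have "(1-\<alpha>) * x \<le> x - \<alpha> * u" using u alpha
        by (simp add: algebra_simps)
      then have "((1-\<alpha>) * x) powr \<gamma> \<le> (x - \<alpha> * u) powr \<gamma>"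
        using gamma pos alpha x by (intro powr_mono2) auto
      moreover have "0 < ((1-\<alpha>) * x) powr \<gamma>" using pos alpha x by simp
      moreover have "0 \<le> h u" using u nonneg by auto
      moreover have "0 < (x - \<alpha> * u) powr \<gamma>" using \<open>(1-\<alpha>) * x \<le> x - \<alpha> * u\<close> pos by simp
      ultimately show "h u / (x - \<alpha> * u) powr \<gamma> \<le> h u / ((1-\<alpha>) * x) powr \<gamma>"
        by (intro divide_left_mono) (auto intro: mult_pos_pos)
    qed
    also have "\<dots> = F x / ((1-\<alpha>) * x) powr \<gamma>"
      unfolding F_def by simp
    finally show ?thesis .
  qed
  have e1: "x powr (-1-\<gamma>) = 1 / (x * x powr \<gamma>)"
    using x by (simp add: powr_diff powr_minus powr_add divide_simps)
  have "h x = \<gamma> / x * ?I" using eq x by blast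
  moreover have "\<gamma> / x * (F x / x powr \<gamma>) = \<gamma> * x powr (-1-\<gamma>) * F x"
    unfolding e1 by simp
  moreover have "\<gamma> / x * (F x / ((1-\<alpha>) * x) powr \<gamma>) = \<gamma> * (1-\<alpha>) powr (-\<gamma>) * x powr (-1-\<gamma>) * F x"
    unfolding e1 using alpha x by (simp add: powr_mult powr_minus divide_simps)
  moreover have "0 \<le> \<gamma> / x" using gamma x by simp
  ultimately show "\<gamma> * x powr (-1-\<gamma>) * F x \<le> h x"
    "h x \<le> \<gamma> * (1-\<alpha>) powr (-\<gamma>) * x powr (-1-\<gamma>) * F x"
    using mult_left_mono[OF lo, of "\<gamma> / x"] mult_left_mono[OF up, of "\<gamma> / x"] by simp_all
qed


lemma F_mono: "0 < y \<Longrightarrow> y \<le> x \<Longrightarrow> F y \<le> F x"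
  using F_split[of y x] set_int_nonneg[of "{y..<x}" h lborel] nonneg by fastforce

lemma two_point:
  assumes y: "0 < y" and yx: "y < x"
  shows "F y * (y powr (-\<gamma>) - x powr (-\<gamma>)) \<le> F x - F y"
proof -
  have gi: "set_integrable lborel {y..<x} (\<lambda>u. \<gamma> * u powr (-1-\<gamma>))"
   and gv: "(LINT u:{y..<x}|lborel. \<gamma> * u powr (-1-\<gamma>)) = y powr (-\<gamma>) - x powr (-\<gamma>)"
    using powr_int_eq[OF y yx gamma] by auto
  have "F y * (y powr (-\<gamma>) - x powr (-\<gamma>)) = (LINT u:{y..<x}|lborel. F y * (\<gamma> * u powr (-1-\<gamma>)))"
    using gv by simp
  also have "\<dots> \<le> (LINT u:{y..<x}|lborel. h u)"
  proof (rule set_integral_mono)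
    show "set_integrable lborel {y..<x} (\<lambda>u. F y * (\<gamma> * u powr (-1-\<gamma>)))"
      using gi by (rule set_integrable_mult_right)
    show "set_integrable lborel {y..<x} h" using y by (intro int_sub) auto
    fix u assume u: "u \<in> {y..<x}"
    then have u0: "0 < u" using y by auto
    have "F y * (\<gamma> * u powr (-1-\<gamma>)) \<le> F u * (\<gamma> * u powr (-1-\<gamma>))"
      using F_mono[OF y] u gamma by (intro mult_right_mono) auto
    also have "\<dots> \<le> h u" using h_bounds(1)[OF u0] by (simp add: mult_ac)
    finally show "F y * (\<gamma> * u powr (-1-\<gamma>)) \<le> h u" .
  qed
  also have "\<dots> = F x - F y" using F_split[of y x] y yx by simp
  finally show ?thesis .
qed

lemma F_exp_aux:
  assumes y: "0 < y" and d: "0 < d" "d < y powr (-\<gamma>)" and N: "0 < N"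
  shows "F y * (1 + d / real N) ^ N \<le> 1"
proof -
  define a where "a = y powr (-\<gamma>)"
  define v where "v k = a - real k * d / real N" for k :: nat
  define t where "t k = v k powr (-1/\<gamma>)" for k
  have vpos: "0 < v k" if "k \<le> N" for k
  proof -
    have "real k * d / real N \<le> d" using that N d
      by (simp add: divide_simps mult_right_mono)
    then show ?thesis unfolding v_def a_def using d by linarith
  qed
  have tv: "t k powr (-\<gamma>) = v k" if "k \<le> N" for k
    unfolding t_def using vpos[OF that] gamma by (simp add: powr_powr)
  have t0: "t 0 = y" unfolding t_def v_def a_def using y gamma by (simp add: powr_powr)
  have tpos: "0 < t k" if "k \<le> N" for k unfolding t_def
    using vpos[OF that] by simp
  have tinc: "t k < t (Suc k)" if "Suc k \<le> N" for k
  proof -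
    have "v (Suc k) < v k" unfolding v_def using d N by (simp add: divide_simps algebra_simps)
    then show ?thesis unfolding t_def
      using vpos[OF that] gamma by (intro powr_less_mono2_neg) auto
  qed
  have ind: "F y * (1 + d / real N) ^ k \<le> F (t k)" if "k \<le> N" for k
    using that
  proof (induction k)
    case 0
    then show ?case using t0 by simp
  next
    case (Suc k)
    then have IH: "F y * (1 + d / real N) ^ k \<le> F (t k)" by simp
    have "F (t k) * (t k powr (-\<gamma>) - t (Suc k) powr (-\<gamma>)) \<le> F (t (Suc k)) - F (t k)"
      using two_point[OF tpos tinc[OF Suc.prems]] Suc.prems by simp
    moreover have "t k powr (-\<gamma>) - t (Suc k) powr (-\<gamma>) = d / real N"
      using tv[OF Suc.prems] tv[of k] Suc.prems unfolding v_def by (simp add: algebra_simps divide_simps)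
    ultimately have "F (t k) * (1 + d / real N) \<le> F (t (Suc k))" by (simp add: algebra_simps)
    moreover have "F y * (1 + d / real N) ^ Suc k \<le> F (t k) * (1 + d / real N)"
      using mult_right_mono[OF IH, of "1 + d / real N"] d N by (simp add: mult_ac)
    ultimately show ?case by linarith
  qed
  show ?thesis using ind[of N] F_le1[of "t N"] by simp
qed

lemma F_exp:
  assumes y: "0 < y"
  shows "F y \<le> exp (- (y powr (-\<gamma>)))"
proof (rule ccontr)
  define a where "a = y powr (-\<gamma>)"
  have a0: "0 < a" unfolding a_def using y by simp
  assume "\<not> F y \<le> exp (- (y powr (-\<gamma>)))"
  then have gt: "exp (-a) < F y" unfolding a_def by simp
  then have Fp: "0 < F y" by (smt (verit) exp_gt_zero)
  have "ln (exp (-a)) < ln (F y)" using gt Fp by (subst ln_less_cancel_iff) auto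
  then have la: "- ln (F y) < a" by simp
  define d where "d = (max 0 (- ln (F y)) + a) / 2"
  have d0: "0 < d" and da: "d < a" and dl: "- ln (F y) < d"
    unfolding d_def using a0 la by auto
  have lim: "(\<lambda>N. F y * (1 + d / real N) ^ N) \<longlonglongrightarrow> F y * exp d"
    by (intro tendsto_mult tendsto_const tendsto_exp_limit_sequentially)
  have "F y * exp d \<le> 1"
  proof (rule LIMSEQ_le_const2[OF lim])
    show "\<exists>N. \<forall>n\<ge>N. F y * (1 + d / real n) ^ n \<le> 1"
      using F_exp_aux[OF y d0] da unfolding a_def by (intro exI[of _ 1]) auto
  qed
  moreover have "exp (- ln (F y)) < exp d" using dl by simp
  then have "1 / F y < exp d" using Fp by (simp add: exp_minus inverse_eq_divide)
  then have "1 < F y * exp d" using Fp by (simp add: divide_simps mult.commute)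
  ultimately show False by simp
qed

lemma h_upper:
  assumes x: "0 < x"
  shows "h x \<le> \<gamma> * (1-\<alpha>) powr (-\<gamma>) * (x powr (-1-\<gamma>) * exp (- (x powr (-\<gamma>))))"
proof -
  have "h x \<le> \<gamma> * (1-\<alpha>) powr (-\<gamma>) * x powr (-1-\<gamma>) * F x" by (rule h_bounds(2)[OF x])
  also have "\<dots> \<le> \<gamma> * (1-\<alpha>) powr (-\<gamma>) * x powr (-1-\<gamma>) * exp (- (x powr (-\<gamma>)))"
    using F_exp[OF x] gamma by (intro mult_left_mono) auto
  finally show ?thesis by (simp add: mult_ac)
qed

end
lemma Gamma_cv:
  fixes \<sigma> \<gamma> :: real
  assumes g: "0 < \<gamma>" and s: "\<sigma> < 1 + \<gamma>"
  shows "set_integrable lborel {0<..} (\<lambda>x. x powr (\<sigma>-2-\<gamma>) * exp (- (x powr (-\<gamma>))))"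
    "(LINT x:{0<..}|lborel. x powr (\<sigma>-2-\<gamma>) * exp (- (x powr (-\<gamma>)))) = Gamma ((1+\<gamma>-\<sigma>)/\<gamma>) / \<gamma>"
proof -
  define z where "z = (1+\<gamma>-\<sigma>)/\<gamma>"
  have z0: "0 < z" unfolding z_def using g s by simp
  define f where "f t = t powr (z - 1) / exp t" for t :: real
  have "(f has_integral Gamma z) {0..}" unfolding f_def by (rule Gamma_integral_real[OF z0])
  then have "((\<lambda>t. if t \<in> {0<..} then f t else 0) has_integral Gamma z) {0..}"
    by (rule has_integral_spike [of "{0}", rotated 2]) auto
  then have fi: "(f has_integral Gamma z) {0<..}"
    by (subst (asm) has_integral_restrict) auto
  have fa: "f absolutely_integrable_on {0<..}"
    using fi unfolding f_def by (intro nonnegative_absolutely_integrable_1) (auto simp: has_integral_integrable)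
  define gg where "gg x = x powr (-\<gamma>)" for x :: real
  define gg' where "gg' x = -\<gamma> * x powr (-\<gamma> - 1)" for x :: real
  have img: "gg ` {0<..} = {0<..}"
  proof
    show "gg ` {0<..} \<subseteq> {0<..}" unfolding gg_def by auto
    show "{0<..} \<subseteq> gg ` {0<..}"
    proof
      fix t :: real assume t: "t \<in> {0<..}"
      then have "gg (t powr (-1/\<gamma>)) = t" unfolding gg_def using g by (simp add: powr_powr)
      moreover have "t powr (-1/\<gamma>) \<in> {0<..}" using t by simp
      ultimately show "t \<in> gg ` {0<..}" by (metis image_eqI)
    qed
  qed
  have inj: "inj_on gg {0<..}"
  proof (rule inj_onI)
    fix x y :: real assume "x \<in> {0<..}" "y \<in> {0<..}" "gg x = gg y"
    then have "(x powr (-\<gamma>)) powr (-1/\<gamma>) = (y powr (-\<gamma>)) powr (-1/\<gamma>)" unfolding gg_def by simp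
    then show "x = y" using g \<open>x \<in> {0<..}\<close> \<open>y \<in> {0<..}\<close> by (simp add: powr_powr)
  qed
  have der: "(gg has_field_derivative gg' x) (at x within {0<..})" if "x \<in> {0<..}" for x
  proof -
    have "(gg has_real_derivative gg' x) (at x)"
      unfolding gg_def gg'_def by (rule has_real_derivative_powr) (use that in simp)
    then show ?thesis by (rule has_field_derivative_at_within)
  qed
  have cv: "(\<lambda>x. \<bar>gg' x\<bar> * f (gg x)) absolutely_integrable_on {0<..} \<and>
           integral {0<..} (\<lambda>x. \<bar>gg' x\<bar> * f (gg x)) = Gamma z"
    using has_absolute_integral_change_of_variables_1'[of "{0<..}" gg gg' f "Gamma z", OF _ der inj]
      img fa fi by (simp add: integral_unique)
  have eqf: "\<bar>gg' x\<bar> * f (gg x) = \<gamma> * (x powr (\<sigma>-2-\<gamma>) * exp (- (x powr (-\<gamma>))))" if "x \<in> {0<..}" for x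
  proof -
    have x: "0 < x" using that by simp
    have ex: "- \<gamma> * (z - 1) = \<sigma> - 1" unfolding z_def using g by (simp add: field_simps)
    have "(x powr (-\<gamma>)) powr (z - 1) = x powr (- \<gamma> * (z - 1))" by (simp add: powr_powr)
    then have "(x powr (-\<gamma>)) powr (z - 1) = x powr (\<sigma> - 1)" unfolding ex .
    moreover have "x powr (-\<gamma> - 1) * x powr (\<sigma> - 1) = x powr (\<sigma>-2-\<gamma>)"
    proof -
      have "x powr (-\<gamma> - 1) * x powr (\<sigma> - 1) = x powr ((-\<gamma> - 1) + (\<sigma> - 1))"
        by (rule powr_add[symmetric])
      also have "(-\<gamma> - 1) + (\<sigma> - 1) = \<sigma>-2-\<gamma>" by simp
      finally show ?thesis .
    qed
    ultimately show ?thesis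
      unfolding gg_def gg'_def f_def using x g by (simp add: abs_mult exp_minus field_simps)
  qed
  let ?\<phi> = "\<lambda>x. x powr (\<sigma>-2-\<gamma>) * exp (- (x powr (-\<gamma>)))"
  have "(\<lambda>x. \<gamma> * ?\<phi> x) absolutely_integrable_on {0<..}"
  proof -
    have "set_integrable lebesgue {0<..} (\<lambda>x. \<bar>gg' x\<bar> * f (gg x)) =
          set_integrable lebesgue {0<..} (\<lambda>x. \<gamma> * ?\<phi> x)"
      by (rule set_integrable_cong) (use eqf in auto)
    then show ?thesis using cv by blast
  qed
  then have ai: "(\<lambda>x. (1/\<gamma>) * (\<gamma> * ?\<phi> x)) absolutely_integrable_on {0<..}"
    by (rule set_integrable_mult_right)
  have ai2: "?\<phi> absolutely_integrable_on {0<..}"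
  proof -
    have "set_integrable lebesgue {0<..} (\<lambda>x. (1/\<gamma>) * (\<gamma> * ?\<phi> x)) =
          set_integrable lebesgue {0<..} ?\<phi>"
      by (rule set_integrable_cong) (use g in auto)
    then show ?thesis using ai by blast
  qed
  have meas: "(\<lambda>x. indicator {0<..} x *\<^sub>R ?\<phi> x) \<in> borel_measurable lborel"
    by measurable
  show si: "set_integrable lborel {0<..} ?\<phi>"
    using ai2 meas unfolding set_integrable_def by (simp add: integrable_completion)
  have "(LINT x:{0<..}|lborel. ?\<phi> x) = integral {0<..} ?\<phi>"
    by (rule set_borel_integral_eq_integral(2)[OF si])
  also have "integral {0<..} (\<lambda>x. \<gamma> * ?\<phi> x) = Gamma z"
    using cv eqf by (metis (no_types, lifting) integral_cong)
  then have "integral {0<..} ?\<phi> = Gamma z / \<gamma>"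
    using g by (simp add: integral_mult_right field_simps)
  finally show "(LINT x:{0<..}|lborel. ?\<phi> x) = Gamma ((1+\<gamma>-\<sigma>)/\<gamma>) / \<gamma>"
    unfolding z_def .
qed

lemma mellin_meas:
  fixes h :: "real \<Rightarrow> real" and s :: complex
  assumes meas: "h \<in> borel_measurable lborel"
  shows "set_borel_measurable lborel {0<..} (mellin_integrand h s)"
proof -
  have e: "(\<lambda>x. indicator {0<..} x *\<^sub>R mellin_integrand h s x) =
     (\<lambda>x. indicator {0<..} x *\<^sub>R (exp ((s - 1) * complex_of_real (ln x)) * complex_of_real (h x)))"
  proof
    fix x :: real
    show "indicator {0<..} x *\<^sub>R mellin_integrand h s x =
     indicator {0<..} x *\<^sub>R (exp ((s - 1) * complex_of_real (ln x)) * complex_of_real (h x))"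
      by (cases "x > 0") (auto simp: mellin_integrand_def powr_def Ln_of_real)
  qed
  show ?thesis unfolding set_borel_measurable_def e using meas by measurable
qed

theorem mainTheorem4:
  fixes h :: "real \<Rightarrow> real" and \<alpha> \<gamma> :: real and s :: complex
  assumes alpha: "0 < \<alpha>" "\<alpha> < 1"
    and gamma: "0 < \<gamma>"
    and meas: "h \<in> borel_measurable lborel"
    and nonneg: "\<And>x. 0 < x \<Longrightarrow> 0 \<le> h x"
    and int_h: "set_integrable lborel {0<..} h"
    and norm_h: "(LINT x:{0<..}|lborel. h x) = 1"
    and eq_int: "\<And>x. 0 < x \<Longrightarrow>
        set_integrable lborel {0<..<x} (\<lambda>u. h u / (x - \<alpha> * u) powr \<gamma>)"
    and eq: "\<And>x. 0 < x \<Longrightarrow>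
        h x = \<gamma> / x * (LINT u:{0<..<x}|lborel. h u / (x - \<alpha> * u) powr \<gamma>)"
    and sigma: "Re s < 1 + \<gamma>"
  shows "set_integrable lborel {0<..} (mellin_integrand h s)
    \<and> norm (mellin h s) \<le> (1 - \<alpha>) powr (- \<gamma>) * Gamma ((1 + \<gamma> - Re s) / \<gamma>)"
proof -
  interpret mell h \<alpha> \<gamma> using assms by unfold_locales
  define \<sigma> where "\<sigma> = Re s"
  define C where "C = \<gamma> * (1-\<alpha>) powr (-\<gamma>)"
  have C0: "0 \<le> C" unfolding C_def using gamma by simp
  let ?B = "\<lambda>x. C * (x powr (\<sigma>-2-\<gamma>) * exp (- (x powr (-\<gamma>))))"
  have Bi: "set_integrable lborel {0<..} ?B"
    using Gamma_cv(1)[OF gamma sigma[folded \<sigma>_def]] by (rule set_integrable_mult_right)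
  have Bv: "(LINT x:{0<..}|lborel. ?B x) = (1 - \<alpha>) powr (- \<gamma>) * Gamma ((1 + \<gamma> - Re s) / \<gamma>)"
    using Gamma_cv(2)[OF gamma sigma[folded \<sigma>_def]] gamma unfolding C_def \<sigma>_def by simp
  have nb: "norm (mellin_integrand h s x) \<le> ?B x" if x: "x \<in> {0<..}" for x
  proof -
    have x0: "0 < x" using x by simp
    have "norm (mellin_integrand h s x) = x powr (\<sigma> - 1) * h x"
    proof -
      have a: "norm (complex_of_real x powr (s - 1)) = Re (complex_of_real x) powr Re (s - 1)"
        by (rule norm_powr_real_powr) (use x0 in auto)
      have b: "norm (complex_of_real (h x)) = h x" using nonneg[OF x0] by simp
      show ?thesis unfolding mellin_integrand_def \<sigma>_def norm_mult a b by simp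
    qed
    also have "\<dots> \<le> x powr (\<sigma> - 1) * (C * (x powr (-1-\<gamma>) * exp (- (x powr (-\<gamma>)))))"
      using h_upper[OF x0] unfolding C_def by (intro mult_left_mono) auto
    also have "\<dots> = C * ((x powr (\<sigma> - 1) * x powr (-1-\<gamma>)) * exp (- (x powr (-\<gamma>))))"
      by (simp add: mult_ac)
    also have "x powr (\<sigma> - 1) * x powr (-1-\<gamma>) = x powr ((\<sigma> - 1) + (-1-\<gamma>))"
      by (rule powr_add[symmetric])
    also have "(\<sigma> - 1) + (-1-\<gamma>) = \<sigma>-2-\<gamma>" by simp
    finally show ?thesis .
  qed
  have mi: "set_integrable lborel {0<..} (mellin_integrand h s)"
  proof (rule set_integrable_bound[OF Bi mellin_meas[OF meas]])
    show "AE x in lborel. x \<in> {0<..} \<longrightarrow> norm (mellin_integrand h s x) \<le> norm (?B x)"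
    proof (rule AE_I2, rule impI)
      fix x :: real assume "x \<in> {0<..}"
      then show "norm (mellin_integrand h s x) \<le> norm (?B x)"
        using nb[of x] by (metis abs_ge_self order_trans real_norm_def)
    qed
  qed
  have "norm (mellin h s) \<le> (LINT x:{0<..}|lborel. norm (mellin_integrand h s x))"
    unfolding mellin_def by (rule set_integral_norm_bound[OF mi])
  also have "\<dots> \<le> (LINT x:{0<..}|lborel. ?B x)"
    using set_integrable_norm[OF mi] Bi nb by (rule set_integral_mono)
  finally have "norm (mellin h s) \<le> (LINT x:{0<..}|lborel. ?B x)" .
  then have "norm (mellin h s) \<le> (1 - \<alpha>) powr (- \<gamma>) * Gamma ((1 + \<gamma> - Re s) / \<gamma>)"
    using Bv by (rule ord_le_eq_trans)
  then show ?thesis using mi by blast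
qed

end
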